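(* Let $K$ be a connected CW complex, $f:K\to K$ a pointed cellular map with $f\circ f\simeq f$, and $H:K\times I\to K$ a (not necessarily pointed) homotopy from $f$ to $f^2$. Let $d:K\to\mathrm{Tel}(f)$ and $u:\mathrm{Tel}(f)\to K$ be the maps described in the context. Then $g=d\circ u:\mathrm{Tel}(f)\to\mathrm{Tel}(f)$ satisfies $g\circ g\simeq g$, and if $g$ splits then $f$ splits.
   Context: $\mathrm{Tel}(f)$ is the union over $n\in\mathbb{Z}$ of the unreduced mapping cylinders $M_n$ of $f:K_n\to K_{n+1}$, each $K_n$ a copy of $K$, glued along the $K_{n+1}$. The map $d:K\to\mathrm{Tel}(f)$ is $f$ regarded as a map into the copy $K_0$; $u:\mathrm{Tel}(f)\to K$ equals $f$ on each copy $K_n$ and equals $H(x,t)$ at the point $(x,t)$ of $M_n$. A map $h:X\to X$ splits if there are a space $L$ and maps $d':X\to L$, $u':L\to X$ with $d'\circ u'\simeq\mathrm{id}_L$ and $u'\circ d'\simeq h$. Homotopies are free. *)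

theory Defs
  imports "HOL-Analysis.Analysis"
begin

definition quotient_topology :: "'a topology \<Rightarrow> ('a \<Rightarrow> 'b) \<Rightarrow> 'b topology" where
  "quotient_topology X q =
     topology (\<lambda>U. U \<subseteq> q ` topspace X \<and> openin X {x \<in> topspace X. q x \<in> U})"

lemma istopology_quotient:
  "istopology (\<lambda>U. U \<subseteq> q ` topspace X \<and> openin X {x \<in> topspace X. q x \<in> U})"
proof -
  have 1: "openin X {x \<in> topspace X. q x \<in> S \<inter> T}"
    if "openin X {x \<in> topspace X. q x \<in> S}" "openin X {x \<in> topspace X. q x \<in> T}" for S T
  proof -
    have "{x \<in> topspace X. q x \<in> S \<inter> T} =
          {x \<in> topspace X. q x \<in> S} \<inter> {x \<in> topspace X. q x \<in> T}" by blast
    then show ?thesis using that by auto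
  qed
  have 2: "openin X {x \<in> topspace X. q x \<in> \<Union>\<K>}"
    if "\<forall>K\<in>\<K>. openin X {x \<in> topspace X. q x \<in> K}" for \<K>
  proof -
    have "{x \<in> topspace X. q x \<in> \<Union>\<K>} = (\<Union>K\<in>\<K>. {x \<in> topspace X. q x \<in> K})" by blast
    then show ?thesis using that by auto
  qed
  show ?thesis unfolding istopology_def using 1 2 by blast
qed

definition disc_pts :: "nat \<Rightarrow> (nat \<Rightarrow> real) set" where
  "disc_pts n = {x. (\<forall>i\<ge>n. x i = 0) \<and> (\<Sum>i<n. (x i)^2) \<le> 1}"

definition open_disc_pts :: "nat \<Rightarrow> (nat \<Rightarrow> real) set" where
  "open_disc_pts n = {x. (\<forall>i\<ge>n. x i = 0) \<and> (\<Sum>i<n. (x i)^2) < 1}"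

definition sphere_pts :: "nat \<Rightarrow> (nat \<Rightarrow> real) set" where
  "sphere_pts n = {x. (\<forall>i\<ge>n. x i = 0) \<and> (\<Sum>i<n. (x i)^2) = 1}"

text \<open>A CW structure on a space X (classical definition of J.H.C. Whitehead):
  C is the set of (open) cells, cdim gives the dimension of each cell and \<Phi> its
  characteristic map.\<close>

definition cw_structure ::
  "'a topology \<Rightarrow> 'a set set \<Rightarrow> ('a set \<Rightarrow> nat) \<Rightarrow> ('a set \<Rightarrow> (nat \<Rightarrow> real) \<Rightarrow> 'a) \<Rightarrow> bool" where
  "cw_structure X C cdim \<Phi> \<longleftrightarrow>
     Hausdorff_space X \<and>
     {} \<notin> C \<and> pairwise disjnt C \<and> \<Union>C = topspace X \<and>
     (\<forall>c\<in>C.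
        continuous_map (subtopology (Euclidean_space (cdim c)) (disc_pts (cdim c))) X (\<Phi> c) \<and>
        homeomorphic_map (subtopology (Euclidean_space (cdim c)) (open_disc_pts (cdim c)))
                         (subtopology X c) (\<Phi> c) \<and>
        \<Phi> c ` sphere_pts (cdim c) \<subseteq> \<Union>{c'\<in>C. cdim c' < cdim c}) \<and>
     (\<forall>c\<in>C. finite {c'\<in>C. c' \<inter> X closure_of c \<noteq> {}}) \<and>
     (\<forall>A. A \<subseteq> topspace X \<longrightarrow> (\<forall>c\<in>C. closedin X (A \<inter> X closure_of c)) \<longrightarrow> closedin X A)"

definition skeleton :: "'a set set \<Rightarrow> ('a set \<Rightarrow> nat) \<Rightarrow> nat \<Rightarrow> 'a set" where
  "skeleton C cdim n = \<Union>{c\<in>C. cdim c \<le> n}"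

definition cellular_map :: "'a set set \<Rightarrow> ('a set \<Rightarrow> nat) \<Rightarrow> ('a \<Rightarrow> 'a) \<Rightarrow> bool" where
  "cellular_map C cdim f \<longleftrightarrow> (\<forall>n. f ` skeleton C cdim n \<subseteq> skeleton C cdim n)"

definition splits_through :: "'b topology \<Rightarrow> 'a topology \<Rightarrow> ('a \<Rightarrow> 'a) \<Rightarrow> bool" where
  "splits_through L X h \<longleftrightarrow>
     (\<exists>d' u'. continuous_map X L d' \<and> continuous_map L X u' \<and>
              homotopic_with (\<lambda>_. True) L L (d' \<circ> u') id \<and>
              homotopic_with (\<lambda>_. True) X X (u' \<circ> d') h)"

text \<open>Points of Tel(f) are represented by triples (n, x, t) with n an integer (the index of
  the cylinder M_n), x a point of K (= K_n) and t in [0,1).  The space is the quotient of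
  the disjoint union over n of the cylinders K_n \<times> [0,1] under the identification
  (n, x, 1) \<sim> (n+1, f x, 0), i.e. the union of the unreduced mapping cylinders M_n of
  f : K_n \<rightarrow> K_(n+1) glued along K_(n+1); the point (n, x, 0) is x in the copy K_n.\<close>

definition tel_quot :: "('a \<Rightarrow> 'a) \<Rightarrow> int \<times> 'a \<times> real \<Rightarrow> int \<times> 'a \<times> real" where
  "tel_quot f = (\<lambda>(n, x, t). if t = 1 then (n + 1, f x, 0) else (n, x, t))"

definition tel_cylinders :: "'a topology \<Rightarrow> (int \<times> 'a \<times> real) topology" where
  "tel_cylinders K = prod_topology (discrete_topology UNIV) (prod_topology K (top_of_set {0..1}))"

definition Tel :: "'a topology \<Rightarrow> ('a \<Rightarrow> 'a) \<Rightarrow> (int \<times> 'a \<times> real) topology" where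
  "Tel K f = quotient_topology (tel_cylinders K) (tel_quot f)"

definition tel_d :: "('a \<Rightarrow> 'a) \<Rightarrow> 'a \<Rightarrow> int \<times> 'a \<times> real" where
  "tel_d f x = (0, f x, 0)"

text \<open>u : Tel(f) \<rightarrow> K is H(x,t) at the point (x,t) of M_n (and hence f on each K_n).\<close>
definition tel_u :: "('a \<times> real \<Rightarrow> 'a) \<Rightarrow> int \<times> 'a \<times> real \<Rightarrow> 'a" where
  "tel_u H = (\<lambda>(n, x, t). H (x, t))"

end

theory Submission
  imports Defs
begin

abbreviation "HT \<equiv> homotopic_with (\<lambda>_. True)"

lemma HT_left: "HT X Y f g \<Longrightarrow> continuous_map Y Z h \<Longrightarrow> HT X Z (h \<circ> f) (h \<circ> g)"
  by (rule homotopic_with_compose_continuous_map_left) auto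

lemma HT_right: "HT Y Z f g \<Longrightarrow> continuous_map X Y h \<Longrightarrow> HT X Z (f \<circ> h) (g \<circ> h)"
  by (rule homotopic_with_compose_continuous_map_right) auto

lemma abstract_idem:
  assumes d: "continuous_map K T d" and u: "continuous_map T K u" and f: "continuous_map K K f"
    and ud: "HT K K (u \<circ> d) f" and df: "HT K T (d \<circ> f) d"
  shows "HT T T ((d \<circ> u) \<circ> (d \<circ> u)) (d \<circ> u)"
proof -
  have "HT T T ((d \<circ> (u \<circ> d)) \<circ> u) ((d \<circ> f) \<circ> u)"
    by (rule HT_right[OF HT_left[OF ud d] u])
  moreover have "HT T T ((d \<circ> f) \<circ> u) (d \<circ> u)"
    by (rule HT_right[OF df u])
  ultimately have "HT T T ((d \<circ> (u \<circ> d)) \<circ> u) (d \<circ> u)"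
    by (rule homotopic_with_trans)
  then show ?thesis by (simp add: o_assoc)
qed

lemma abstract_split:
  assumes d: "continuous_map K T d" and u: "continuous_map T K u" and f: "continuous_map K K f"
    and ud: "HT K K (u \<circ> d) f" and ff: "HT K K (f \<circ> f) f"
    and sp: "splits_through L T (d \<circ> u)"
  shows "splits_through L K f"
proof -
  obtain d' u' where d': "continuous_map T L d'" and u': "continuous_map L T u'"
    and h1: "HT L L (d' \<circ> u') id" and h2: "HT T T (u' \<circ> d') (d \<circ> u)"
    using sp unfolding splits_through_def by blast
  have c1: "continuous_map K L (d' \<circ> d)" using d d' by (rule continuous_map_compose)
  have c2: "continuous_map L K (u \<circ> u')" using u' u by (rule continuous_map_compose)
  have a1: "HT L L (d' \<circ> d \<circ> u \<circ> u') (d' \<circ> u' \<circ> d' \<circ> u')"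
    using HT_right[OF HT_left[OF homotopic_with_symD[OF h2] d'] u'] by (simp add: o_assoc)
  have a2: "HT L L (d' \<circ> u' \<circ> d' \<circ> u') (d' \<circ> u')"
    using HT_right[OF h1 continuous_map_compose[OF u' d']] by (simp add: o_assoc)
  have "HT L L (d' \<circ> d \<circ> u \<circ> u') id"
    using homotopic_with_trans[OF homotopic_with_trans[OF a1 a2] h1] .
  then have "HT L L ((d' \<circ> d) \<circ> (u \<circ> u')) id" by (simp add: o_assoc)
  moreover
  have b1: "HT K K (u \<circ> u' \<circ> d' \<circ> d) (u \<circ> d \<circ> u \<circ> d)"
    using HT_right[OF HT_left[OF h2 u] d] by (simp add: o_assoc)
  have b2: "HT K K (u \<circ> d \<circ> u \<circ> d) (f \<circ> u \<circ> d)"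
    using HT_right[OF ud continuous_map_compose[OF d u]] by (simp add: o_assoc)
  have b3: "HT K K (f \<circ> u \<circ> d) (f \<circ> f)"
    using HT_left[OF ud f] by (simp add: o_assoc)
  have "HT K K (u \<circ> u' \<circ> d' \<circ> d) f"
    using homotopic_with_trans[OF homotopic_with_trans[OF homotopic_with_trans[OF b1 b2] b3] ff] .
  then have "HT K K ((u \<circ> u') \<circ> (d' \<circ> d)) f" by (simp add: o_assoc)
  ultimately show ?thesis unfolding splits_through_def using c1 c2 by blast
qed

lemma openin_quotient:
  "openin (quotient_topology X q) U \<longleftrightarrow> U \<subseteq> q ` topspace X \<and> openin X {x \<in> topspace X. q x \<in> U}"
  unfolding quotient_topology_def by (simp only: topology_inverse'[OF istopology_quotient])

lemma topspace_quotient: "topspace (quotient_topology X q) = q ` topspace X"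
proof -
  have "openin (quotient_topology X q) (q ` topspace X)"
  proof -
    have "{x \<in> topspace X. q x \<in> q ` topspace X} = topspace X" by auto
    then show ?thesis unfolding openin_quotient by simp
  qed
  then show ?thesis
    by (metis openin_quotient openin_subset subset_antisym openin_topspace)
qed

lemma continuous_quotient_map: "continuous_map X (quotient_topology X q) q"
  unfolding continuous_map_def topspace_quotient
  by (auto simp: openin_quotient)

lemma continuous_from_quotient:
  assumes "continuous_map X Y (g \<circ> q)"
  shows "continuous_map (quotient_topology X q) Y g"
proof -
  have "{x \<in> topspace X. q x \<in> {y \<in> q ` topspace X. g y \<in> V}} = {x \<in> topspace X. (g \<circ> q) x \<in> V}" for V
    by auto
  then show ?thesis using assms
    unfolding continuous_map_def topspace_quotient
    by (auto simp: openin_quotient)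
qed

theorem lemma2p5:
  fixes K :: "'a topology" and C :: "'a set set" and cdim :: "'a set \<Rightarrow> nat"
    and \<Phi> :: "'a set \<Rightarrow> (nat \<Rightarrow> real) \<Rightarrow> 'a"
    and f :: "'a \<Rightarrow> 'a" and k0 :: 'a and H :: "'a \<times> real \<Rightarrow> 'a"
  assumes cw: "cw_structure K C cdim \<Phi>"
    and conn: "connected_space K"
    and base: "{k0} \<in> C" "cdim {k0} = 0"
    and fcont: "continuous_map K K f"
    and fpointed: "f k0 = k0"
    and fcell: "cellular_map C cdim f"
    and fidem: "homotopic_with (\<lambda>_. True) K K (f \<circ> f) f"
    and Hcont: "continuous_map (prod_topology K (top_of_set {0..1})) K H"
    and H0: "\<And>x. x \<in> topspace K \<Longrightarrow> H (x, 0) = f x"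
    and H1: "\<And>x. x \<in> topspace K \<Longrightarrow> H (x, 1) = f (f x)"
  shows "homotopic_with (\<lambda>_. True) (Tel K f) (Tel K f)
           ((tel_d f \<circ> tel_u H) \<circ> (tel_d f \<circ> tel_u H)) (tel_d f \<circ> tel_u H)
         \<and> ((\<exists>L :: 'b topology. splits_through L (Tel K f) (tel_d f \<circ> tel_u H))
              \<longrightarrow> (\<exists>L :: 'b topology. splits_through L K f))"
proof -
  define j where "j = (\<lambda>y::'a. tel_quot f (0::int, y, 0::real))"
  have jeq: "j y = (0, y, 0)" for y unfolding j_def tel_quot_def by simp
  have dj: "tel_d f = j \<circ> f" by (rule ext) (simp add: tel_d_def jeq)
  have cj: "continuous_map K (Tel K f) j"
  proof -
    have "continuous_map K (tel_cylinders K) (\<lambda>y. (0::int, y, 0::real))"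
      unfolding tel_cylinders_def
      by (intro continuous_map_pairedI continuous_map_id[unfolded id_def]) simp_all
    then have "continuous_map K (Tel K f) (tel_quot f \<circ> (\<lambda>y. (0::int, y, 0::real)))"
      unfolding Tel_def by (rule continuous_map_compose[OF _ continuous_quotient_map])
    then show ?thesis by (simp add: j_def o_def)
  qed
  have ftop: "\<And>x. x \<in> topspace K \<Longrightarrow> f x \<in> topspace K"
    using continuous_map_image_subset_topspace[OF fcont] by blast
  have cd: "continuous_map K (Tel K f) (tel_d f)"
    unfolding dj using fcont cj by (rule continuous_map_compose)
  have cu: "continuous_map (Tel K f) K (tel_u H)"
    unfolding Tel_def
  proof (rule continuous_from_quotient)
    have "continuous_map (tel_cylinders K) K (H \<circ> snd)"
      unfolding tel_cylinders_def
      by (rule continuous_map_compose[OF continuous_map_snd Hcont])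
    moreover have "(H \<circ> snd) p = (tel_u H \<circ> tel_quot f) p" if "p \<in> topspace (tel_cylinders K)" for p
    proof -
      obtain n x t where p: "p = (n, x, t)" by (cases p) auto
      have x: "x \<in> topspace K" using that by (simp add: p tel_cylinders_def)
      have fx: "f x \<in> topspace K" using ftop[OF x] .
      show ?thesis by (simp add: p tel_u_def tel_quot_def H0[OF fx] H1[OF x])
    qed
    ultimately show "continuous_map (tel_cylinders K) K (tel_u H \<circ> tel_quot f)"
      by (rule continuous_map_eq)
  qed
  have utop: "tel_u H p \<in> topspace K" if "p \<in> topspace (Tel K f)" for p
    using continuous_map_image_subset_topspace[OF cu] that by blast
  have ud: "HT K K (tel_u H \<circ> tel_d f) f"
  proof -
    have "HT K K (tel_u H \<circ> tel_d f) (f \<circ> f)"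
      by (rule homotopic_with_equal[OF _ _ continuous_map_compose[OF cd cu]]) (simp_all add: tel_u_def tel_d_def H0[OF ftop])
    then show ?thesis using fidem by (rule homotopic_with_trans)
  qed
  have df: "HT K (Tel K f) (tel_d f \<circ> f) (tel_d f)"
    unfolding dj o_assoc[symmetric] by (rule HT_left[OF fidem cj])
  show ?thesis
  proof (intro conjI impI)
    show "HT (Tel K f) (Tel K f) ((tel_d f \<circ> tel_u H) \<circ> (tel_d f \<circ> tel_u H)) (tel_d f \<circ> tel_u H)"
      by (rule abstract_idem[OF cd cu fcont ud df])
    assume "\<exists>L :: 'b topology. splits_through L (Tel K f) (tel_d f \<circ> tel_u H)"
    then obtain L :: "'b topology" where "splits_through L (Tel K f) (tel_d f \<circ> tel_u H)" by blast
    then show "\<exists>L :: 'b topology. splits_through L K f"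
      using abstract_split[OF cd cu fcont ud fidem] by blast
  qed
qed

end
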